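(* Let $k\ge 2$ and $j\ge 0$, $n\ge 0$ be integers, and consider the random $k$-tree process. Suppose that in $G(j)$ a vertex $x$ has $A>0$ neighbors and is contained in $B$ many $k$-cliques. Conditional on this, the degree of $x$ in $G(n+j)$ is distributed as $$A+\frac{1}{k-1}\left(\operatorname{Urn}\left(B,\,kj+1-B,\,\begin{bmatrix}k&0\\1&k-1\end{bmatrix},\,n\right)-B\right).$$
   Context: Random $k$-tree process: $G(0)$ is a clique on $k$ vertices; for $t\ge1$, $G(t)$ is obtained from $G(t-1)$ by choosing a $k$-clique of $G(t-1)$ uniformly at random, creating a new vertex, and joining it to all vertices of the chosen clique ($G(t)$ has $kt+1$ many $k$-cliques). Generalized Pólya–Eggenberger urn: for nonnegative integers $\alpha,\beta,\gamma,\delta$, start with $W_0$ white and $B_0$ black balls; in each step a ball is drawn uniformly at random and returned; if it is white, $\delta$ white and $\gamma$ black balls are added; if it is black, $\beta$ white and $\alpha$ black balls are added. $\operatorname{Urn}\left(W_0,B_0,\begin{bmatrix}\alpha&\beta\\\gamma&\delta\end{bmatrix},n\right)$ denotes the number of white balls right after $n$ draws. *)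

theory Defs
  imports "HOL-Probability.Probability"
begin

text \<open>A graph is a pair (V, E) of a vertex set of naturals and a set of
undirected edges, each edge being a 2-element set of vertices.\<close>
type_synonym graph = "nat set \<times> nat set set"

definition kcliques :: "nat \<Rightarrow> graph \<Rightarrow> nat set set" where
  "kcliques k G = {S. S \<subseteq> fst G \<and> card S = k \<and>
      (\<forall>u\<in>S. \<forall>v\<in>S. u \<noteq> v \<longrightarrow> {u, v} \<in> snd G)}"

definition neighbors :: "graph \<Rightarrow> nat \<Rightarrow> nat set" where
  "neighbors G x = {y. y \<in> fst G \<and> y \<noteq> x \<and> {x, y} \<in> snd G}"

definition degree :: "graph \<Rightarrow> nat \<Rightarrow> nat" where
  "degree G x = card (neighbors G x)"

definition nkcliques_at :: "nat \<Rightarrow> graph \<Rightarrow> nat \<Rightarrow> nat" where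
  "nkcliques_at k G x = card {S \<in> kcliques k G. x \<in> S}"

definition ktree_init :: "nat \<Rightarrow> graph" where
  "ktree_init k = ({0..<k}, {{u, v} | u v. u < k \<and> v < k \<and> u \<noteq> v})"

text \<open>One step: choose a k-clique uniformly at random, add a fresh vertex
(the vertex card V, which is not in V = {0..<card V}) joined to all vertices
of the chosen clique.\<close>
definition ktree_step :: "nat \<Rightarrow> graph \<Rightarrow> graph pmf" where
  "ktree_step k G = map_pmf
     (\<lambda>C. (insert (card (fst G)) (fst G), snd G \<union> {{card (fst G), u} | u. u \<in> C}))
     (pmf_of_set (kcliques k G))"

text \<open>Joint law of the trajectory [G(0), G(1), ..., G(t)].\<close>
fun ktree_traj :: "nat \<Rightarrow> nat \<Rightarrow> graph list pmf" where
  "ktree_traj k 0 = return_pmf [ktree_init k]"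
| "ktree_traj k (Suc t) =
     bind_pmf (ktree_traj k t) (\<lambda>gs. map_pmf (\<lambda>g. gs @ [g]) (ktree_step k (last gs)))"

text \<open>Generalized Polya-Eggenberger urn with replacement matrix
[[alpha, beta], [gamma, delta]]: a white draw adds delta white and gamma black,
a black draw adds beta white and alpha black.\<close>
definition urn_step :: "nat \<Rightarrow> nat \<Rightarrow> nat \<Rightarrow> nat \<Rightarrow> nat \<times> nat \<Rightarrow> (nat \<times> nat) pmf" where
  "urn_step \<alpha> \<beta> \<gamma> \<delta> s = (case s of (w, b) \<Rightarrow>
     if w + b = 0 then return_pmf (w, b)
     else map_pmf (\<lambda>white. if white then (w + \<delta>, b + \<gamma>) else (w + \<beta>, b + \<alpha>))
            (bernoulli_pmf (real w / real (w + b))))"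

fun urn_state :: "nat \<Rightarrow> nat \<Rightarrow> nat \<Rightarrow> nat \<Rightarrow> nat \<Rightarrow> nat \<Rightarrow> nat \<Rightarrow> (nat \<times> nat) pmf" where
  "urn_state W0 B0 \<alpha> \<beta> \<gamma> \<delta> 0 = return_pmf (W0, B0)"
| "urn_state W0 B0 \<alpha> \<beta> \<gamma> \<delta> (Suc n) =
     bind_pmf (urn_state W0 B0 \<alpha> \<beta> \<gamma> \<delta> n) (urn_step \<alpha> \<beta> \<gamma> \<delta>)"

definition Urn :: "nat \<Rightarrow> nat \<Rightarrow> nat \<Rightarrow> nat \<Rightarrow> nat \<Rightarrow> nat \<Rightarrow> nat \<Rightarrow> nat pmf" where
  "Urn W0 B0 \<alpha> \<beta> \<gamma> \<delta> n = map_pmf fst (urn_state W0 B0 \<alpha> \<beta> \<gamma> \<delta> n)"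

end

theory Submission
  imports Defs
begin


definition newg :: "graph \<Rightarrow> nat set \<Rightarrow> graph" where
  "newg G C = (insert (card (fst G)) (fst G), snd G \<union> {{card (fst G), u} | u. u \<in> C})"

lemma ktree_step_newg: "ktree_step k G = map_pmf (newg G) (pmf_of_set (kcliques k G))"
  unfolding ktree_step_def newg_def by simp

definition Inv :: "graph \<Rightarrow> bool" where
  "Inv G \<longleftrightarrow> fst G = {0..<card (fst G)} \<and> (\<forall>e\<in>snd G. e \<subseteq> fst G)"

lemma Inv_finite: "Inv G \<Longrightarrow> finite (fst G)"
  unfolding Inv_def by (metis finite_atLeastLessThan)

lemma Inv_notin: "Inv G \<Longrightarrow> card (fst G) \<notin> fst G"
  unfolding Inv_def by (metis atLeastLessThan_iff less_irrefl)

lemma Inv_newg: assumes "Inv G" "C \<subseteq> fst G" shows "Inv (newg G C)"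
proof -
  have f: "finite (fst G)" and n: "card (fst G) \<notin> fst G" using Inv_finite Inv_notin assms by auto
  have c: "card (insert (card (fst G)) (fst G)) = Suc (card (fst G))" using f n by simp
  have "insert (card (fst G)) (fst G) = {0..<Suc (card (fst G))}"
    using assms(1) unfolding Inv_def by (metis atLeastLessThanSuc le0)
  moreover have "\<forall>e\<in>snd (newg G C). e \<subseteq> fst (newg G C)"
    using assms unfolding Inv_def newg_def by auto
  ultimately show ?thesis unfolding Inv_def by (simp add: newg_def c)
qed

lemma kcliques_finite: "Inv G \<Longrightarrow> finite (kcliques k G)"
  by (rule finite_subset[of _ "Pow (fst G)"]) (auto simp: kcliques_def Inv_finite)

lemma kcliques_newg:
  assumes I: "Inv G" and C: "C \<in> kcliques k G" and k: "k \<ge> 1"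
  shows "kcliques k (newg G C) = kcliques k G \<union> (\<lambda>u. insert (card (fst G)) (C - {u})) ` C"
    (is "?L = ?O \<union> ?N")
proof -
  define v where "v = card (fst G)"
  have f: "finite (fst G)" and n: "v \<notin> fst G" using Inv_finite Inv_notin I v_def by auto
  have CV: "C \<subseteq> fst G" and cC: "card C = k" and Ce: "\<And>a b. a \<in> C \<Longrightarrow> b \<in> C \<Longrightarrow> a \<noteq> b \<Longrightarrow> {a, b} \<in> snd G"
    using C unfolding kcliques_def by auto
  have fC: "finite C" using CV f finite_subset by blast
  have E: "\<forall>e\<in>snd G. e \<subseteq> fst G" using I unfolding Inv_def by auto
  have ng: "newg G C = (insert v (fst G), snd G \<union> {{v, u} | u. u \<in> C})" unfolding newg_def v_def by simp
  show ?thesis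
  proof
    show "?O \<union> ?N \<subseteq> ?L"
    proof
      fix S assume "S \<in> ?O \<union> ?N"
      then show "S \<in> ?L"
      proof
        assume "S \<in> ?O" then show ?thesis unfolding kcliques_def ng by auto
      next
        assume "S \<in> ?N"
        then obtain u where u: "u \<in> C" and S: "S = insert v (C - {u})" unfolding v_def by auto
        have "v \<notin> C - {u}" using CV n by auto
        then have "card S = k" using S cC fC u k by (simp add: card_Diff_singleton)
        moreover have "S \<subseteq> insert v (fst G)" using S CV by auto
        moreover have "\<forall>a\<in>S. \<forall>b\<in>S. a \<noteq> b \<longrightarrow> {a, b} \<in> snd G \<union> {{v, u} | u. u \<in> C}"
          using S Ce by (auto simp: insert_commute)
        ultimately show ?thesis unfolding kcliques_def ng by simp
      qed
    qed
  next
    show "?L \<subseteq> ?O \<union> ?N"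
    proof
      fix S assume S: "S \<in> ?L"
      have SV: "S \<subseteq> insert v (fst G)" and cS: "card S = k"
        and Se: "\<And>a b. a \<in> S \<Longrightarrow> b \<in> S \<Longrightarrow> a \<noteq> b \<Longrightarrow> {a, b} \<in> snd G \<or> (\<exists>u\<in>C. {a,b} = {v, u})"
        using S unfolding kcliques_def ng by (auto, blast)
      show "S \<in> ?O \<union> ?N"
      proof (cases "v \<in> S")
        case False
        then have "S \<subseteq> fst G" using SV by auto
        moreover have "\<forall>a\<in>S. \<forall>b\<in>S. a \<noteq> b \<longrightarrow> {a, b} \<in> snd G"
        proof (intro ballI impI)
          fix a b assume "a \<in> S" "b \<in> S" "a \<noteq> b"
          have "{a, b} \<in> snd G \<or> (\<exists>u\<in>C. {a,b} = {v, u})" using Se \<open>a \<in> S\<close> \<open>b \<in> S\<close> \<open>a \<noteq> b\<close> by blast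
          moreover have "\<not> (\<exists>u\<in>C. {a,b} = {v, u})"
          proof
            assume "\<exists>u\<in>C. {a,b} = {v, u}"
            then have "v = a \<or> v = b" by (auto simp: doubleton_eq_iff)
            then show False using False \<open>a \<in> S\<close> \<open>b \<in> S\<close> by auto
          qed
          ultimately show "{a, b} \<in> snd G" by blast
        qed
        ultimately show ?thesis using cS unfolding kcliques_def by auto
      next
        case True
        define T where "T = S - {v}"
        have TC: "T \<subseteq> C"
        proof
          fix a assume a: "a \<in> T"
          then have "a \<in> S" "a \<noteq> v" unfolding T_def by auto
          then have "{a, v} \<in> snd G \<or> (\<exists>u\<in>C. {a,v} = {v, u})" using Se True by auto
          then show "a \<in> C" using E n by (auto simp: doubleton_eq_iff)
        qed
        have fS: "finite S" using SV f finite_subset by blast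
        have cT: "card T = k - 1" unfolding T_def using cS True fS by simp
        have "card T < card C" using cT cC k by simp
        then obtain u where u: "u \<in> C" "u \<notin> T" using TC by (metis subsetI psubsetI psubset_card_mono fC less_irrefl subset_antisym)
        have "T \<subseteq> C - {u}" using TC u by auto
        moreover have "card (C - {u}) = card T" using cT cC u fC by simp
        ultimately have "T = C - {u}" using fC by (metis card_subset_eq finite_Diff)
        then have "S = insert v (C - {u})" using True unfolding T_def by auto
        then show ?thesis using u unfolding v_def by auto
      qed
    qed
  qed
qed



lemma inj_newcl:
  assumes "v \<notin> C" shows "inj_on (\<lambda>u. insert v (C - {u})) C"
proof (rule inj_onI)
  fix a b assume ab: "a \<in> C" "b \<in> C" "insert v (C - {a}) = insert v (C - {b})"
  then have "C - {a} = C - {b}" using assms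
    by (metis Diff_insert_absorb insert_Diff_single insert_absorb Diff_iff singletonI insertE)
  then show "a = b" using ab by blast
qed

lemma card_kcliques_newg:
  assumes I: "Inv G" and C: "C \<in> kcliques k G" and k: "k \<ge> 1"
  shows "card (kcliques k (newg G C)) = card (kcliques k G) + k"
proof -
  define v where "v = card (fst G)"
  have n: "v \<notin> fst G" using Inv_notin I v_def by auto
  have CV: "C \<subseteq> fst G" and cC: "card C = k" using C unfolding kcliques_def by auto
  have vC: "v \<notin> C" using CV n by auto
  have fin: "finite (kcliques k G)" using kcliques_finite I by auto
  have fC: "finite C" using CV Inv_finite[OF I] finite_subset by blast
  have disj: "kcliques k G \<inter> (\<lambda>u. insert v (C - {u})) ` C = {}"
    using n unfolding kcliques_def by auto
  have "card (kcliques k (newg G C)) = card (kcliques k G) + card ((\<lambda>u. insert v (C - {u})) ` C)"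
    unfolding kcliques_newg[OF I C k, folded v_def]
    by (rule card_Un_disjoint[OF fin _ disj]) (use fC in auto)
  also have "card ((\<lambda>u. insert v (C - {u})) ` C) = k"
    using card_image[OF inj_newcl[OF vC]] cC by simp
  finally show ?thesis .
qed

lemma nk_newg:
  assumes I: "Inv G" and C: "C \<in> kcliques k G" and k: "k \<ge> 1" and x: "x \<noteq> card (fst G)"
  shows "nkcliques_at k (newg G C) x = nkcliques_at k G x + (if x \<in> C then k - 1 else 0)"
proof -
  define v where "v = card (fst G)"
  have n: "v \<notin> fst G" using Inv_notin I v_def by auto
  have CV: "C \<subseteq> fst G" and cC: "card C = k" using C unfolding kcliques_def by auto
  have vC: "v \<notin> C" using CV n by auto
  have fin: "finite (kcliques k G)" using kcliques_finite I by auto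
  have fC: "finite C" using CV Inv_finite[OF I] finite_subset by blast
  define U where "U = {u \<in> C. x \<in> C \<and> u \<noteq> x}"
  have eq: "{S \<in> kcliques k (newg G C). x \<in> S} = {S \<in> kcliques k G. x \<in> S} \<union> (\<lambda>u. insert v (C - {u})) ` U"
    unfolding kcliques_newg[OF I C k, folded v_def] U_def using x v_def by auto
  have disj: "{S \<in> kcliques k G. x \<in> S} \<inter> (\<lambda>u. insert v (C - {u})) ` U = {}"
    using n unfolding kcliques_def by auto
  have "nkcliques_at k (newg G C) x = card {S \<in> kcliques k G. x \<in> S} + card ((\<lambda>u. insert v (C - {u})) ` U)"
    unfolding nkcliques_at_def eq
    by (rule card_Un_disjoint[OF _ _ disj]) (use fin fC U_def in auto)
  also have "card ((\<lambda>u. insert v (C - {u})) ` U) = card U"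
    by (rule card_image, rule inj_on_subset[OF inj_newcl[OF vC]]) (auto simp: U_def)
  also have "card U = (if x \<in> C then k - 1 else 0)"
  proof (cases "x \<in> C")
    case True
    then have "U = C - {x}" unfolding U_def by auto
    then show ?thesis using True cC fC by simp
  next
    case False
    then show ?thesis unfolding U_def by simp
  qed
  finally show ?thesis unfolding nkcliques_at_def by simp
qed

lemma deg_newg:
  assumes I: "Inv G" and CV: "C \<subseteq> fst G" and x: "x \<noteq> card (fst G)"
  shows "degree (newg G C) x = degree G x + (if x \<in> C then 1 else 0)"
proof -
  define v where "v = card (fst G)"
  have n: "v \<notin> fst G" using Inv_notin I v_def by auto
  have E: "\<forall>e\<in>snd G. e \<subseteq> fst G" using I unfolding Inv_def by auto
  have f: "finite (fst G)" using Inv_finite I by auto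
  have fN: "finite (neighbors G x)" using f unfolding neighbors_def by auto
  have vN: "v \<notin> neighbors G x" using n unfolding neighbors_def by auto
  have eq: "neighbors (newg G C) x = neighbors G x \<union> (if x \<in> C then {v} else {})"
  proof (rule set_eqI)
    fix y
    show "y \<in> neighbors (newg G C) x \<longleftrightarrow> y \<in> neighbors G x \<union> (if x \<in> C then {v} else {})"
    proof (cases "y = v")
      case True
      have "{x, v} \<notin> snd G" using E n by auto
      then show ?thesis using True x v_def n unfolding neighbors_def newg_def
        by (auto simp: doubleton_eq_iff)
    next
      case False
      then show ?thesis using x v_def unfolding neighbors_def newg_def
        by (auto simp: doubleton_eq_iff)
    qed
  qed
  show ?thesis unfolding degree_def eq using fN vN by auto
qed

definition st :: "nat \<Rightarrow> nat \<Rightarrow> graph \<Rightarrow> nat \<times> nat" where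
  "st k x G = (nkcliques_at k G x, card (kcliques k G) - nkcliques_at k G x)"

lemma nk_le: "Inv G \<Longrightarrow> nkcliques_at k G x \<le> card (kcliques k G)"
  unfolding nkcliques_at_def by (rule card_mono) (auto simp: kcliques_finite)

lemma map_pmf_of_set_bernoulli:
  assumes "finite K" "K \<noteq> {}"
  shows "map_pmf P (pmf_of_set K) = bernoulli_pmf (real (card {C \<in> K. P C}) / real (card K))"
proof (rule pmf_eqI)
  fix b :: bool
  have cK: "card K > 0" using assms by (simp add: card_gt_0_iff)
  have le: "card {C \<in> K. P C} \<le> card K" using assms by (intro card_mono) auto
  have split: "card {C \<in> K. \<not> P C} = card K - card {C \<in> K. P C}"
  proof -
    have "K = {C \<in> K. P C} \<union> {C \<in> K. \<not> P C}" by auto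
    then have "card K = card {C \<in> K. P C} + card {C \<in> K. \<not> P C}"
      using assms(1) by (metis (no_types, lifting) card_Un_disjoint finite_Un disjoint_iff mem_Collect_eq)
    then show ?thesis by simp
  qed
  have m: "pmf (map_pmf P (pmf_of_set K)) b = real (card (K \<inter> P -` {b})) / real (card K)"
    by (simp add: pmf_map measure_pmf_of_set assms)
  show "pmf (map_pmf P (pmf_of_set K)) b = pmf (bernoulli_pmf (real (card {C \<in> K. P C}) / real (card K))) b"
  proof (cases b)
    case True
    have "K \<inter> P -` {b} = {C \<in> K. P C}" using True by auto
    then show ?thesis using m True le cK by (simp add: divide_le_eq_1)
  next
    case False
    have "K \<inter> P -` {b} = {C \<in> K. \<not> P C}" using False by auto
    then show ?thesis using m False le cK split by (simp add: divide_le_eq_1 of_nat_diff diff_divide_distrib)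
  qed
qed

lemma step_urn:
  assumes I: "Inv G" and ne: "kcliques k G \<noteq> {}" and k: "k \<ge> 1" and x: "x \<noteq> card (fst G)"
  shows "map_pmf (st k x) (ktree_step k G) = urn_step k 0 1 (k - 1) (st k x G)"
proof -
  define W where "W = nkcliques_at k G x"
  define T where "T = card (kcliques k G)"
  have fin: "finite (kcliques k G)" using kcliques_finite I by auto
  have WT: "W \<le> T" using nk_le[OF I] W_def T_def by auto
  have T0: "T > 0" using fin ne T_def by (simp add: card_gt_0_iff)
  define f where "f = (\<lambda>white. if white then (W + (k - 1), (T - W) + 1) else (W + 0, (T - W) + k))"
  have "map_pmf (st k x) (ktree_step k G) = map_pmf (\<lambda>C. f (x \<in> C)) (pmf_of_set (kcliques k G))"
    unfolding ktree_step_newg map_pmf_comp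
  proof (rule map_pmf_cong[OF refl])
    fix C assume "C \<in> set_pmf (pmf_of_set (kcliques k G))"
    then have C: "C \<in> kcliques k G" using fin ne by simp
    then have CV: "C \<subseteq> fst G" unfolding kcliques_def by auto
    show "st k x (newg G C) = f (x \<in> C)"
      unfolding st_def f_def nk_newg[OF I C k x] card_kcliques_newg[OF I C k] W_def[symmetric] T_def[symmetric]
      using WT k by auto
  qed
  also have "\<dots> = map_pmf f (map_pmf (\<lambda>C. x \<in> C) (pmf_of_set (kcliques k G)))"
    by (simp add: map_pmf_comp)
  also have "\<dots> = map_pmf f (bernoulli_pmf (real W / real T))"
    unfolding map_pmf_of_set_bernoulli[OF fin ne] W_def T_def nkcliques_at_def by simp
  also have "\<dots> = urn_step k 0 1 (k - 1) (st k x G)"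
    unfolding urn_step_def st_def W_def[symmetric] T_def[symmetric] f_def using WT T0 by (simp add: add.commute) (use T0 in linarith)
  finally show ?thesis .
qed



fun fut :: "nat \<Rightarrow> nat \<Rightarrow> graph \<Rightarrow> graph list pmf" where
  "fut k 0 g = return_pmf []"
| "fut k (Suc n) g = bind_pmf (fut k n g) (\<lambda>hs. map_pmf (\<lambda>h. hs @ [h]) (ktree_step k (last (g # hs))))"

lemma set_step: "Inv G \<Longrightarrow> kcliques k G \<noteq> {} \<Longrightarrow> set_pmf (ktree_step k G) = newg G ` kcliques k G"
  unfolding ktree_step_newg by (simp add: kcliques_finite)

lemma init_Inv: "Inv (ktree_init k)"
  unfolding Inv_def ktree_init_def by auto

lemma init_kcliques: "kcliques k (ktree_init k) = {{0..<k}}"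
proof -
  have "S = {0..<k}" if "S \<in> kcliques k (ktree_init k)" for S
  proof -
    have "S \<subseteq> {0..<k}" "card S = k" using that unfolding kcliques_def ktree_init_def by auto
    then show ?thesis by (metis card_atLeastLessThan card_subset_eq finite_atLeastLessThan minus_nat.diff_0)
  qed
  moreover have "{0..<k} \<in> kcliques k (ktree_init k)"
    unfolding kcliques_def ktree_init_def by auto blast
  ultimately show ?thesis by blast
qed

lemma traj_set:
  assumes "k \<ge> 1" "gs \<in> set_pmf (ktree_traj k t)"
  shows "length gs = Suc t \<and> Inv (last gs) \<and> card (kcliques k (last gs)) = k * t + 1"
  using assms(2)
proof (induction t arbitrary: gs)
  case 0
  then show ?case by (simp add: init_Inv init_kcliques)
next
  case (Suc t)
  then obtain gs0 g where gs0: "gs0 \<in> set_pmf (ktree_traj k t)" and g: "g \<in> set_pmf (ktree_step k (last gs0))"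
    and gs: "gs = gs0 @ [g]" by auto
  from Suc.IH[OF gs0] have l: "length gs0 = Suc t" and I: "Inv (last gs0)"
    and c: "card (kcliques k (last gs0)) = k * t + 1" by auto
  have ne: "kcliques k (last gs0) \<noteq> {}" using c by auto
  from g obtain C where C: "C \<in> kcliques k (last gs0)" and gC: "g = newg (last gs0) C"
    using set_step[OF I ne] by auto
  have "Inv g" using Inv_newg[OF I] C gC unfolding kcliques_def by auto
  moreover have "card (kcliques k g) = k * Suc t + 1" using card_kcliques_newg[OF I C assms(1)] c gC by simp
  ultimately show ?case using gs l by simp
qed

lemma fut_set:
  assumes k: "k \<ge> 1" and I: "Inv g" and ne: "kcliques k g \<noteq> {}" and x: "x \<in> fst g"
    and hs: "hs \<in> set_pmf (fut k n g)"
  shows "length hs = n \<and> Inv (last (g # hs)) \<and> kcliques k (last (g # hs)) \<noteq> {} \<and> x \<in> fst (last (g # hs))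
     \<and> (k - 1) * degree (last (g # hs)) x + nkcliques_at k g x = (k - 1) * degree g x + nkcliques_at k (last (g # hs)) x"
  using hs
proof (induction n arbitrary: hs)
  case 0
  then show ?case using I ne x by simp
next
  case (Suc n)
  then obtain hs0 h where hs0: "hs0 \<in> set_pmf (fut k n g)" and h: "h \<in> set_pmf (ktree_step k (last (g # hs0)))"
    and hs: "hs = hs0 @ [h]" by auto
  define G where "G = last (g # hs0)"
  from Suc.IH[OF hs0, folded G_def] have l: "length hs0 = n" and IG: "Inv G" and neG: "kcliques k G \<noteq> {}"
    and xG: "x \<in> fst G"
    and dG: "(k - 1) * degree G x + nkcliques_at k g x = (k - 1) * degree g x + nkcliques_at k G x" by auto
  from h obtain C where C: "C \<in> kcliques k G" and hC: "h = newg G C"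
    using set_step[OF IG neG] G_def by auto
  have CV: "C \<subseteq> fst G" using C unfolding kcliques_def by auto
  have xv: "x \<noteq> card (fst G)" using xG Inv_notin[OF IG] by auto
  have lh: "last (g # hs) = h" using hs by simp
  have "Inv h" using Inv_newg[OF IG CV] hC by simp
  moreover have "kcliques k h \<noteq> {}"
    using card_kcliques_newg[OF IG C k] hC k by (metis add_is_0 card.empty not_one_le_zero)
  moreover have "x \<in> fst h" using xG hC unfolding newg_def by simp
  moreover have "(k - 1) * degree h x + nkcliques_at k g x = (k - 1) * degree g x + nkcliques_at k h x"
    unfolding hC deg_newg[OF IG CV xv] nk_newg[OF IG C k xv] using dG
    by (cases "x \<in> C") (simp_all add: algebra_simps)
  ultimately show ?case using l hs lh by simp
qed

lemma fut_urn:
  assumes k: "k \<ge> 1" and I: "Inv g" and ne: "kcliques k g \<noteq> {}" and x: "x \<in> fst g"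
  shows "map_pmf (\<lambda>hs. st k x (last (g # hs))) (fut k n g)
       = urn_state (fst (st k x g)) (snd (st k x g)) k 0 1 (k - 1) n"
proof (induction n)
  case 0
  then show ?case by simp
next
  case (Suc n)
  have "map_pmf (\<lambda>hs. st k x (last (g # hs))) (fut k (Suc n) g)
      = bind_pmf (fut k n g) (\<lambda>hs. map_pmf (st k x) (ktree_step k (last (g # hs))))"
    by (simp add: map_bind_pmf map_pmf_comp)
  also have "\<dots> = bind_pmf (fut k n g) (\<lambda>hs. urn_step k 0 1 (k - 1) (st k x (last (g # hs))))"
  proof (rule bind_pmf_cong[OF refl])
    fix hs assume hs: "hs \<in> set_pmf (fut k n g)"
    from fut_set[OF k I ne x hs] have IG: "Inv (last (g # hs))" and neG: "kcliques k (last (g # hs)) \<noteq> {}"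
      and xG: "x \<in> fst (last (g # hs))" by auto
    have xv: "x \<noteq> card (fst (last (g # hs)))" using xG Inv_notin[OF IG] by auto
    show "map_pmf (st k x) (ktree_step k (last (g # hs))) = urn_step k 0 1 (k - 1) (st k x (last (g # hs)))"
      by (rule step_urn[OF IG neG k xv])
  qed
  also have "\<dots> = bind_pmf (map_pmf (\<lambda>hs. st k x (last (g # hs))) (fut k n g)) (urn_step k 0 1 (k - 1))"
    by (simp add: bind_map_pmf)
  also have "\<dots> = urn_state (fst (st k x g)) (snd (st k x g)) k 0 1 (k - 1) (Suc n)"
    using Suc by simp
  finally show ?case .
qed

lemma traj_ne: "gs \<in> set_pmf (ktree_traj k t) \<Longrightarrow> gs \<noteq> []"
  by (induction t arbitrary: gs) auto

lemma traj_split: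
  "ktree_traj k (j + n) = bind_pmf (ktree_traj k j) (\<lambda>gs. map_pmf (\<lambda>hs. gs @ hs) (fut k n (last gs)))"
proof (induction n)
  case 0
  then show ?case by (simp add: bind_return_pmf')
next
  case (Suc n)
  have "ktree_traj k (j + Suc n) = bind_pmf (ktree_traj k (j + n)) (\<lambda>gs. map_pmf (\<lambda>g. gs @ [g]) (ktree_step k (last gs)))"
    by simp
  also have "\<dots> = bind_pmf (ktree_traj k j) (\<lambda>gs. bind_pmf (fut k n (last gs))
        (\<lambda>hs. map_pmf (\<lambda>g. gs @ hs @ [g]) (ktree_step k (last (gs @ hs)))))"
    unfolding Suc by (simp add: bind_assoc_pmf bind_map_pmf)
  also have "\<dots> = bind_pmf (ktree_traj k j) (\<lambda>gs. map_pmf (\<lambda>hs. gs @ hs) (fut k (Suc n) (last gs)))"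
  proof (rule bind_pmf_cong[OF refl])
    fix gs assume "gs \<in> set_pmf (ktree_traj k j)"
    then have ne: "gs \<noteq> []" by (rule traj_ne)
    have "\<And>hs. last (gs @ hs) = last (last gs # hs)" using ne by (simp add: last_append)
    then show "bind_pmf (fut k n (last gs)) (\<lambda>hs. map_pmf (\<lambda>g. gs @ hs @ [g]) (ktree_step k (last (gs @ hs))))
        = map_pmf (\<lambda>hs. gs @ hs) (fut k (Suc n) (last gs))"
      by (simp add: map_bind_pmf map_pmf_comp)
  qed
  finally show ?case .
qed



lemma cond_bind:
  fixes p :: "'a pmf" and L :: "'a \<Rightarrow> 'b pmf" and F :: "'b \<Rightarrow> 'c"
  assumes R: "\<And>x. x \<in> set_pmf p \<Longrightarrow> x \<in> S \<Longrightarrow> map_pmf F (L x) = R"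
    and E: "\<And>x y. x \<in> set_pmf p \<Longrightarrow> y \<in> set_pmf (L x) \<Longrightarrow> (y \<in> E \<longleftrightarrow> x \<in> S)"
    and ne: "set_pmf p \<inter> S \<noteq> {}"
  shows "map_pmf F (cond_pmf (bind_pmf p L) E) = R"
proof -
  have key: "emeasure (bind_pmf p L) (E \<inter> F -` A) = emeasure p S * emeasure R A" for A
  proof -
    have "emeasure (bind_pmf p L) (E \<inter> F -` A) = (\<integral>\<^sup>+x. emeasure (L x) (E \<inter> F -` A) \<partial>p)" by simp
    also have "\<dots> = (\<integral>\<^sup>+x. emeasure R A * indicator S x \<partial>p)"
    proof (rule nn_integral_cong_AE, rule AE_pmfI)
      fix x assume x: "x \<in> set_pmf p"
      have "emeasure (L x) (E \<inter> F -` A) = emeasure (L x) ((E \<inter> F -` A) \<inter> set_pmf (L x))"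
        by (simp add: emeasure_Int_set_pmf)
      also have "\<dots> = emeasure R A * indicator S x"
      proof (cases "x \<in> S")
        case True
        have "(E \<inter> F -` A) \<inter> set_pmf (L x) = F -` A \<inter> set_pmf (L x)" using E[OF x] True by auto
        then have "emeasure (L x) ((E \<inter> F -` A) \<inter> set_pmf (L x)) = emeasure (L x) (F -` A)"
          by (simp add: emeasure_Int_set_pmf)
        also have "\<dots> = emeasure (map_pmf F (L x)) A" by (simp add: emeasure_map_pmf)
        finally show ?thesis using R[OF x True] True by simp
      next
        case False
        have "(E \<inter> F -` A) \<inter> set_pmf (L x) = {}" using E[OF x] False by auto
        then show ?thesis using False by simp
      qed
      finally show "emeasure (L x) (E \<inter> F -` A) = emeasure R A * indicator S x" .
    qed
    also have "\<dots> = emeasure R A * emeasure p S"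
      by (rule nn_integral_cmult_indicator) simp
    finally show ?thesis by (simp add: mult.commute)
  qed
  have keym: "measure (bind_pmf p L) (E \<inter> F -` A) = measure p S * measure R A" for A
  proof -
    have "ennreal (measure (bind_pmf p L) (E \<inter> F -` A)) = ennreal (measure p S * measure R A)"
      using key[of A] by (simp add: measure_pmf.emeasure_eq_measure ennreal_mult)
    then show ?thesis by (simp add: ennreal_inj)
  qed
  from ne obtain x0 where x0: "x0 \<in> set_pmf p" "x0 \<in> S" by auto
  obtain y0 where y0: "y0 \<in> set_pmf (L x0)" using set_pmf_not_empty[of "L x0"] by blast
  have y0E: "y0 \<in> E" using E[OF x0(1) y0] x0 by simp
  have neP: "set_pmf (bind_pmf p L) \<inter> E \<noteq> {}" using x0 y0 y0E by auto
  have pS: "measure p S > 0" by (rule measure_pmf_posI[OF x0])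
  have mE: "measure (bind_pmf p L) E = measure p S"
    using keym[of UNIV] by simp
  show ?thesis
  proof (rule pmf_eqI)
    fix z
    have "pmf (map_pmf F (cond_pmf (bind_pmf p L) E)) z = measure (cond_pmf (bind_pmf p L) E) (F -` {z})"
      by (rule pmf_map)
    also have "\<dots> = measure (uniform_measure (bind_pmf p L) E) (F -` {z})"
      by (simp add: cond_pmf.rep_eq[OF neP])
    also have "\<dots> = measure (bind_pmf p L) (E \<inter> F -` {z}) / measure (bind_pmf p L) E"
      using pS mE by (subst measure_uniform_measure) (auto simp: measure_pmf.emeasure_eq_measure)
    also have "\<dots> = measure R {z}" using keym[of "{z}"] mE pS by simp
    also have "\<dots> = pmf R z" by (simp add: measure_pmf_single)
    finally show "pmf (map_pmf F (cond_pmf (bind_pmf p L) E)) z = pmf R z" .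
  qed
qed



lemma idx_last:
  assumes "length gs = Suc j" "length hs = n"
  shows "(gs @ hs) ! (n + j) = last (last gs # hs)"
proof (cases "hs = []")
  case True
  have "gs \<noteq> []" using assms by auto
  then show ?thesis using True assms last_conv_nth[of gs] by simp
next
  case False
  then have "n > 0" using assms by auto
  then show ?thesis using assms False by (simp add: nth_append last_conv_nth)
qed

lemma deg_real:
  fixes k d B A w :: nat
  assumes "k \<ge> 2" "(k - 1) * d + B = (k - 1) * A + w"
  shows "real d = real A + (real w - real B) / (real k - 1)"
proof -
  have "real (k - 1) * real d + real B = real (k - 1) * real A + real w"
    using assms(2) by (metis of_nat_add of_nat_mult)
  moreover have "real (k - 1) = real k - 1" using assms(1) by (simp add: of_nat_diff)
  moreover have "real k - 1 > 0" using assms(1) by simp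
  ultimately show ?thesis by (simp add: field_simps)
qed

lemma fut_length: "hs \<in> set_pmf (fut k n g) \<Longrightarrow> length hs = n"
  by (induction n arbitrary: hs) auto

theorem proposition3:
  fixes k j n x A B :: nat
  assumes "k \<ge> 2"
    and "A > 0"
    and "\<exists>gs \<in> set_pmf (ktree_traj k (n + j)).
           degree (gs ! j) x = A \<and> nkcliques_at k (gs ! j) x = B"
  shows "map_pmf (\<lambda>gs. real (degree (gs ! (n + j)) x))
           (cond_pmf (ktree_traj k (n + j))
              {gs. degree (gs ! j) x = A \<and> nkcliques_at k (gs ! j) x = B})
       = map_pmf (\<lambda>w. real A + (real w - real B) / (real k - 1))
           (Urn B (k * j + 1 - B) k 0 1 (k - 1) n)"
proof -
  have k1: "k \<ge> 1" using assms(1) by simp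
  define L where "L = (\<lambda>gs. map_pmf (\<lambda>hs. gs @ hs) (fut k n (last gs)))"
  define S where "S = {gs. degree (last gs) x = A \<and> nkcliques_at k (last gs) x = B}"
  have split: "ktree_traj k (n + j) = bind_pmf (ktree_traj k j) L"
    unfolding L_def by (subst add.commute) (rule traj_split)
  have jn: "(gs @ hs) ! j = last gs" if "gs \<in> set_pmf (ktree_traj k j)" for gs hs
  proof -
    have "length gs = Suc j" using traj_set[OF k1 that] by auto
    moreover have "gs \<noteq> []" using \<open>length gs = Suc j\<close> by auto
    ultimately show ?thesis using last_conv_nth[of gs] by (simp add: nth_append)
  qed
  have Ecase: "(y \<in> {gs. degree (gs ! j) x = A \<and> nkcliques_at k (gs ! j) x = B} \<longleftrightarrow> gs \<in> S)"
    if "gs \<in> set_pmf (ktree_traj k j)" "y \<in> set_pmf (L gs)" for gs y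
  proof -
    from that(2) obtain hs where "y = gs @ hs" unfolding L_def by auto
    then show ?thesis using jn[OF that(1)] unfolding S_def by simp
  qed
  have ne: "set_pmf (ktree_traj k j) \<inter> S \<noteq> {}"
  proof -
    from assms(3) obtain y where y: "y \<in> set_pmf (bind_pmf (ktree_traj k j) L)"
      and yE: "y \<in> {gs. degree (gs ! j) x = A \<and> nkcliques_at k (gs ! j) x = B}"
      unfolding split by auto
    from y obtain gs where gs: "gs \<in> set_pmf (ktree_traj k j)" "y \<in> set_pmf (L gs)" by auto
    then show ?thesis using Ecase[OF gs] yE by auto
  qed
  have Rcase: "map_pmf (\<lambda>gs. real (degree (gs ! (n + j)) x)) (L gs)
      = map_pmf (\<lambda>w. real A + (real w - real B) / (real k - 1)) (Urn B (k * j + 1 - B) k 0 1 (k - 1) n)"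
    if gsP: "gs \<in> set_pmf (ktree_traj k j)" and gsS: "gs \<in> S" for gs
  proof -
    define g where "g = last gs"
    from traj_set[OF k1 gsP] have len: "length gs = Suc j" and I: "Inv g" and c: "card (kcliques k g) = k * j + 1"
      unfolding g_def by auto
    have neg: "kcliques k g \<noteq> {}" using c by auto
    have dA: "degree g x = A" and nB: "nkcliques_at k g x = B" using gsS unfolding S_def g_def by auto
    have "neighbors g x \<noteq> {}" using dA assms(2) unfolding degree_def by auto
    then obtain y where "{x, y} \<in> snd g" unfolding neighbors_def by auto
    then have xg: "x \<in> fst g" using I unfolding Inv_def by auto
    have stg: "st k x g = (B, k * j + 1 - B)" unfolding st_def c nB ..
    have "map_pmf (\<lambda>gs. real (degree (gs ! (n + j)) x)) (L gs)
        = map_pmf (\<lambda>hs. real (degree (last (g # hs)) x)) (fut k n g)"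
      unfolding L_def map_pmf_comp g_def
      by (rule map_pmf_cong[OF refl]) (simp add: idx_last[OF len] fut_length)
    also have "\<dots> = map_pmf (\<lambda>hs. real A + (real (fst (st k x (last (g # hs)))) - real B) / (real k - 1)) (fut k n g)"
    proof (rule map_pmf_cong[OF refl])
      fix hs assume hs: "hs \<in> set_pmf (fut k n g)"
      from fut_set[OF k1 I neg xg hs] have
        "(k - 1) * degree (last (g # hs)) x + nkcliques_at k g x = (k - 1) * degree g x + nkcliques_at k (last (g # hs)) x"
        by auto
      then show "real (degree (last (g # hs)) x) = real A + (real (fst (st k x (last (g # hs)))) - real B) / (real k - 1)"
        unfolding dA nB st_def fst_conv by (rule deg_real[OF assms(1)])
    qed
    also have "\<dots> = map_pmf (\<lambda>w. real A + (real w - real B) / (real k - 1))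
        (map_pmf fst (map_pmf (\<lambda>hs. st k x (last (g # hs))) (fut k n g)))"
      by (simp add: map_pmf_comp)
    also have "\<dots> = map_pmf (\<lambda>w. real A + (real w - real B) / (real k - 1)) (Urn B (k * j + 1 - B) k 0 1 (k - 1) n)"
      unfolding fut_urn[OF k1 I neg xg] stg Urn_def by simp
    finally show ?thesis .
  qed
  show ?thesis unfolding split
    by (rule cond_bind[where S = S]) (use Rcase Ecase ne in auto)
qed


end
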